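(* Consider clipped ADOPT with $\beta_1,\beta_2\in[0,1)$, $\epsilon>0$, learning rates $\alpha_t>0$, clipping values $c_t\ge0$, and deterministic $\theta_0$: $m_0=0$, $v_0=g_0\odot g_0$, and for $t\ge1$, $$m_t=\beta_1m_{t-1}+(1-\beta_1)\,\mathrm{Clip}\Big(\frac{g_t}{\max\{\sqrt{v_{t-1}},\epsilon\}},c_t\Big),\quad\theta_t=\theta_{t-1}-\alpha_tm_t,\quad v_t=\beta_2v_{t-1}+(1-\beta_2)g_t\odot g_t,$$ where $g_0,g_1,\dots$ are random vectors in $\mathbb{R}^D$ with $\mathbb{E}\|g_t\|^2\le G^2$ for all $t\ge0$. Then for all $t\ge0$, $$\mathbb{E}\big[\|m_t\|\big]\le\frac{\sqrt2\,G}{\epsilon}.$$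
   Context: For $a\in\mathbb{R}^D$ and $c\ge0$, $\mathrm{Clip}(a,c)_i=\min\{\max\{a_i,-c\},c\}$. Norms are Euclidean; $\odot$, square root, division and $\max\{\cdot,\epsilon\}$ act elementwise. *)

theory Defs
  imports "HOL-Probability.Probability"
begin

definition clip_vec :: "real^'d \<Rightarrow> real \<Rightarrow> real^'d" where
  "clip_vec a c = (\<chi> i. min (max (a $ i) (- c)) c)"

fun adopt_v :: "real \<Rightarrow> (nat \<Rightarrow> real^'d) \<Rightarrow> nat \<Rightarrow> real^'d" where
  "adopt_v b2 g 0 = (\<chi> i. g 0 $ i * g 0 $ i)"
| "adopt_v b2 g (Suc t) =
     (\<chi> i. b2 * adopt_v b2 g t $ i + (1 - b2) * (g (Suc t) $ i * g (Suc t) $ i))"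

fun adopt_m :: "real \<Rightarrow> real \<Rightarrow> real \<Rightarrow> (nat \<Rightarrow> real) \<Rightarrow> (nat \<Rightarrow> real^'d) \<Rightarrow> nat \<Rightarrow> real^'d" where
  "adopt_m b1 b2 eps c g 0 = 0"
| "adopt_m b1 b2 eps c g (Suc t) =
     (\<chi> i. b1 * adopt_m b1 b2 eps c g t $ i
        + (1 - b1) * clip_vec (\<chi> j. g (Suc t) $ j / max (sqrt (adopt_v b2 g t $ j)) eps) (c (Suc t)) $ i)"

fun adopt_theta :: "real \<Rightarrow> real \<Rightarrow> real \<Rightarrow> (nat \<Rightarrow> real) \<Rightarrow> (nat \<Rightarrow> real) \<Rightarrow> real^'d
                     \<Rightarrow> (nat \<Rightarrow> real^'d) \<Rightarrow> nat \<Rightarrow> real^'d" where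
  "adopt_theta b1 b2 eps c alpha th0 g 0 = th0"
| "adopt_theta b1 b2 eps c alpha th0 g (Suc t) =
     adopt_theta b1 b2 eps c alpha th0 g t - alpha (Suc t) *\<^sub>R adopt_m b1 b2 eps c g (Suc t)"

end

theory Submission
  imports Defs
begin

lemma sq_le: assumes "(x::ennreal)^2 \<le> (ennreal G)^2" "G \<ge> 0" shows "x \<le> ennreal G"
proof (cases x)
  case (real a)
  then have "ennreal (a^2) \<le> ennreal (G^2)" using assms by (simp add: ennreal_power)
  then have "a^2 \<le> G^2" by (simp add: ennreal_le_iff)
  then have "a \<le> G" using assms real by (simp add: power2_le_iff_abs_le)
  then show ?thesis using real by simp
next
  case top
  have "(ennreal G)^2 = ennreal (G^2)" using assms by (simp add: ennreal_power)
  then show ?thesis using assms top by (simp add: top_unique)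
qed

lemma L1:
  assumes "prob_space M" "f \<in> borel_measurable M" "G \<ge> 0"
   "(\<integral>\<^sup>+ x. ennreal ((norm (f x::real^'d))\<^sup>2) \<partial>M) \<le> ennreal (G\<^sup>2)"
  shows "(\<integral>\<^sup>+ x. ennreal (norm (f x)) \<partial>M) \<le> ennreal G"
proof -
  interpret prob_space M by fact
  have "(\<integral>\<^sup>+x. ennreal (norm (f x)) * 1 \<partial>M)\<^sup>2 \<le> (\<integral>\<^sup>+x. ennreal (norm (f x)) ^ 2 \<partial>M) * (\<integral>\<^sup>+x. 1 ^ 2 \<partial>M)"
    by (rule Cauchy_Schwarz_nn_integral) (use assms in auto)
  also have "(\<integral>\<^sup>+x. ennreal (norm (f x)) ^ 2 \<partial>M) = (\<integral>\<^sup>+ x. ennreal ((norm (f x))\<^sup>2) \<partial>M)"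
    by (simp add: ennreal_power)
  also have "(\<integral>\<^sup>+x. 1 ^ 2 \<partial>M) = 1" by (simp add: emeasure_space_1)
  finally have "(\<integral>\<^sup>+x. ennreal (norm (f x)) \<partial>M)\<^sup>2 \<le> ennreal G ^ 2"
    using assms(4) by (simp add: ennreal_power[symmetric] assms(3))
  then show ?thesis
    using assms(3) by (rule sq_le)
qed

lemma clip_norm_le: "c \<ge> 0 \<Longrightarrow> norm (clip_vec a c) \<le> norm a"
  unfolding norm_vec_def clip_vec_def
  by (rule L2_set_mono) (auto simp: abs_le_iff)

lemma div_norm_le:
  assumes "eps > 0"
  shows "norm ((\<chi> j. (h::real^'d) $ j / max (sqrt (v $ j)) eps)) \<le> norm h / eps"
proof -
  have "norm ((\<chi> j. h $ j / max (sqrt (v $ j)) eps)) \<le> norm ((1/eps) *\<^sub>R h)"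
    unfolding norm_vec_def
  proof (rule L2_set_mono)
    fix j
    have "\<bar>h $ j\<bar> / max (sqrt (v $ j)) eps \<le> \<bar>h $ j\<bar> / eps"
      using assms by (intro divide_left_mono) auto
    then show "norm ((\<chi> j. h $ j / max (sqrt (v $ j)) eps) $ j) \<le> norm (((1/eps) *\<^sub>R h) $ j)"
      using assms by (simp add: abs_div)
  qed auto
  then show ?thesis using assms by simp
qed

fun bnd :: "real \<Rightarrow> real \<Rightarrow> (nat \<Rightarrow> 'w \<Rightarrow> real^'d) \<Rightarrow> nat \<Rightarrow> 'w \<Rightarrow> real" where
  "bnd b1 eps g 0 x = 0"
| "bnd b1 eps g (Suc t) x = b1 * bnd b1 eps g t x + (1 - b1) * (norm (g (Suc t) x) / eps)"

theorem lemmaG14: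
  fixes M :: "'w measure"
    and g :: "nat \<Rightarrow> 'w \<Rightarrow> real^'d"
    and beta1 beta2 eps G :: real
    and c alpha :: "nat \<Rightarrow> real"
    and theta0 :: "real^'d"
  assumes "prob_space M"
    and "\<And>t. g t \<in> borel_measurable M"
    and "0 \<le> beta1" "beta1 < 1" "0 \<le> beta2" "beta2 < 1"
    and "eps > 0"
    and "\<And>t. alpha t > 0"
    and "\<And>t. c t \<ge> 0"
    and "G \<ge> 0"
    and "\<And>t. (\<integral>\<^sup>+ x. ennreal ((norm (g t x))\<^sup>2) \<partial>M) \<le> ennreal (G\<^sup>2)"
  shows "\<forall>t. (\<integral>\<^sup>+ x. ennreal (norm (adopt_m beta1 beta2 eps c (\<lambda>s. g s x) t)) \<partial>M)
               \<le> ennreal (sqrt 2 * G / eps)"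
proof
  fix t
  have nn: "bnd beta1 eps g t x \<ge> 0" for t x
    by (induction t) (use assms(3,4,7) in auto)
  have meas: "(\<lambda>x. bnd beta1 eps g t x) \<in> borel_measurable M" for t
  proof (induction t)
    case (Suc t)
    have "(\<lambda>x. norm (g (Suc t) x)) \<in> borel_measurable M" using assms(2) by measurable
    then show ?case using Suc by simp
  qed simp
  have ptw: "norm (adopt_m beta1 beta2 eps c (\<lambda>s. g s x) t) \<le> bnd beta1 eps g t x" for t x
  proof (induction t)
    case (Suc t)
    let ?m = "adopt_m beta1 beta2 eps c (\<lambda>s. g s x) t"
    let ?a = "(\<chi> j. g (Suc t) x $ j / max (sqrt (adopt_v beta2 (\<lambda>s. g s x) t $ j)) eps)"
    have eq: "adopt_m beta1 beta2 eps c (\<lambda>s. g s x) (Suc t) = beta1 *\<^sub>R ?m + (1 - beta1) *\<^sub>R clip_vec ?a (c (Suc t))"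
      by (simp add: vec_eq_iff)
    have "norm (adopt_m beta1 beta2 eps c (\<lambda>s. g s x) (Suc t)) \<le> norm (beta1 *\<^sub>R ?m) + norm ((1 - beta1) *\<^sub>R clip_vec ?a (c (Suc t)))"
      unfolding eq by (rule norm_triangle_ineq)
    also have "\<dots> = beta1 * norm ?m + (1 - beta1) * norm (clip_vec ?a (c (Suc t)))"
      using assms(3,4) by simp
    also have "\<dots> \<le> beta1 * bnd beta1 eps g t x + (1 - beta1) * (norm (g (Suc t) x) / eps)"
    proof (rule add_mono)
      show "beta1 * norm ?m \<le> beta1 * bnd beta1 eps g t x"
        using Suc by (rule mult_left_mono[OF _ assms(3)]) 
      have "norm (clip_vec ?a (c (Suc t))) \<le> norm (g (Suc t) x) / eps"
        using clip_norm_le[OF assms(9)] div_norm_le[OF assms(7)] by (rule order_trans)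
      then show "(1 - beta1) * norm (clip_vec ?a (c (Suc t))) \<le> (1 - beta1) * (norm (g (Suc t) x) / eps)"
        using assms(4) by (intro mult_left_mono) auto
    qed
    finally show ?case by simp
  qed simp
  have gb: "(\<integral>\<^sup>+ x. ennreal (norm (g t x)) \<partial>M) \<le> ennreal G" for t
    by (rule L1[OF assms(1) assms(2) assms(10) assms(11)])
  have ib: "(\<integral>\<^sup>+ x. ennreal (bnd beta1 eps g t x) \<partial>M) \<le> ennreal (G / eps)" for t
  proof (induction t)
    case 0
    then show ?case by simp
  next
    case (Suc t)
    have pw: "ennreal (bnd beta1 eps g (Suc t) x) = ennreal beta1 * ennreal (bnd beta1 eps g t x) + ennreal ((1 - beta1)/eps) * ennreal (norm (g (Suc t) x))" for x
    proof -
      have h1: "0 \<le> beta1 * bnd beta1 eps g t x" using assms(3) nn by simp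
      have h2: "0 \<le> (1 - beta1) / eps * norm (g (Suc t) x)" using assms(4,7) by simp
      have "ennreal (bnd beta1 eps g (Suc t) x) = ennreal (beta1 * bnd beta1 eps g t x + (1 - beta1) / eps * norm (g (Suc t) x))"
        by simp
      also have "\<dots> = ennreal (beta1 * bnd beta1 eps g t x) + ennreal ((1 - beta1) / eps * norm (g (Suc t) x))"
        by (rule ennreal_plus[OF h1 h2])
      also have "\<dots> = ennreal beta1 * ennreal (bnd beta1 eps g t x) + ennreal ((1 - beta1)/eps) * ennreal (norm (g (Suc t) x))"
        using ennreal_mult[OF assms(3) nn] ennreal_mult[of "(1 - beta1) / eps" "norm (g (Suc t) x)"] assms(4,7)
        by simp
      finally show "ennreal (bnd beta1 eps g (Suc t) x) = ennreal beta1 * ennreal (bnd beta1 eps g t x) + ennreal ((1 - beta1)/eps) * ennreal (norm (g (Suc t) x))" .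
    qed
    have "(\<integral>\<^sup>+ x. ennreal (bnd beta1 eps g (Suc t) x) \<partial>M)
        = (\<integral>\<^sup>+ x. ennreal beta1 * ennreal (bnd beta1 eps g t x) + ennreal ((1 - beta1)/eps) * ennreal (norm (g (Suc t) x)) \<partial>M)"
      by (simp only: pw)
    also have "\<dots> = ennreal beta1 * (\<integral>\<^sup>+ x. ennreal (bnd beta1 eps g t x) \<partial>M) + ennreal ((1 - beta1)/eps) * (\<integral>\<^sup>+ x. ennreal (norm (g (Suc t) x)) \<partial>M)"
      using meas assms(2) by (simp add: nn_integral_add nn_integral_cmult)
    also have "\<dots> \<le> ennreal beta1 * ennreal (G / eps) + ennreal ((1 - beta1)/eps) * ennreal G"
      by (intro add_mono mult_left_mono Suc gb) auto
    also have "\<dots> = ennreal (beta1 * (G / eps) + (1 - beta1)/eps * G)"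
    proof -
      have a1: "0 \<le> G / eps" "0 \<le> (1 - beta1) / eps" using assms(4,7,10) by auto
      have a2: "0 \<le> beta1 * (G / eps)" "0 \<le> (1 - beta1) / eps * G" using assms(3,10) a1 by (simp_all only: mult_nonneg_nonneg)
      show ?thesis
        by (simp only: ennreal_plus[OF a2] ennreal_mult[OF assms(3) a1(1)] ennreal_mult[OF a1(2) assms(10)])
    qed
    also have "beta1 * (G / eps) + (1 - beta1)/eps * G = G / eps"
      using assms(7) by (simp add: field_simps)
    finally show ?case .
  qed
  have "(\<integral>\<^sup>+ x. ennreal (norm (adopt_m beta1 beta2 eps c (\<lambda>s. g s x) t)) \<partial>M)
      \<le> (\<integral>\<^sup>+ x. ennreal (bnd beta1 eps g t x) \<partial>M)"
    by (intro nn_integral_mono ennreal_leI ptw)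
  also have "\<dots> \<le> ennreal (G / eps)" by (rule ib)
  also have "\<dots> \<le> ennreal (sqrt 2 * G / eps)"
  proof (rule ennreal_leI)
    have "G \<le> sqrt 2 * G" using assms(10) by (simp add: mult_le_cancel_right1)
    then show "G / eps \<le> sqrt 2 * G / eps" using assms(7) by (simp add: divide_right_mono)
  qed
  finally show "(\<integral>\<^sup>+ x. ennreal (norm (adopt_m beta1 beta2 eps c (\<lambda>s. g s x) t)) \<partial>M)
               \<le> ennreal (sqrt 2 * G / eps)" .
qed

end
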